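(* For every ideal $I\subset\mathbb{C}[\mathrm{GL}_n]$, the matrix amoeba $\mathrm{s}\mathcal{A}(I)$ is closed in $\mathbb{R}^n/\mathcal{S}_n$.
   Context: $\mathbb{C}[\mathrm{GL}_n]$ is the ring of regular functions on $\mathrm{GL}_n(\mathbb{C})$. $\mathcal{S}_n$ acts on $\mathbb{R}^n$ by permuting coordinates; $\mathbb{R}^n/\mathcal{S}_n$ carries the metric $d(x,y) = \min_{\sigma\in\mathcal{S}_n}|\sigma\cdot x - y|$. $\mathrm{sLog}:\mathrm{GL}_n(\mathbb{C})\to\mathbb{R}^n/\mathcal{S}_n$ sends $A$ to $(\ln\lambda_1,\dots,\ln\lambda_n)$ where $\lambda_1,\dots,\lambda_n$ are the singular values of $A$. $\mathrm{s}\mathcal{A}(I) = \mathrm{sLog}(V(I))$ with $V(I) = \{A\in\mathrm{GL}_n(\mathbb{C}) : f(A) = 0\ \forall f\in I\}$. *)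

theory Defs
  imports "HOL-Analysis.Analysis"
begin

text \<open>n x n complex matrices are modelled as complex^'n^'n, with 'n a finite index type
  (n = CARD('n)). GL_n = matrices with nonzero determinant.\<close>

inductive_set poly_fun :: "((complex^'n^'n) \<Rightarrow> complex) set" where
  pf_const: "(\<lambda>A. c) \<in> poly_fun"
| pf_entry: "(\<lambda>A. A $ i $ j) \<in> poly_fun"
| pf_add: "p \<in> poly_fun \<Longrightarrow> q \<in> poly_fun \<Longrightarrow> (\<lambda>A. p A + q A) \<in> poly_fun"
| pf_mult: "p \<in> poly_fun \<Longrightarrow> q \<in> poly_fun \<Longrightarrow> (\<lambda>A. p A * q A) \<in> poly_fun"

text \<open>Regular functions on GL_n: C[GL_n] = C[x_ij][1/det]. A regular function is
  represented canonically as a total function that is 0 off GL_n.\<close>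
definition regular_fun :: "((complex^'n^'n) \<Rightarrow> complex) \<Rightarrow> bool" where
  "regular_fun f \<longleftrightarrow> (\<exists>p k. p \<in> poly_fun \<and>
      f = (\<lambda>A. if det A = 0 then 0 else p A / det A ^ k))"

definition is_ideal_GL :: "((complex^'n^'n) \<Rightarrow> complex) set \<Rightarrow> bool" where
  "is_ideal_GL I \<longleftrightarrow> (\<forall>f\<in>I. regular_fun f) \<and> (\<lambda>A. 0) \<in> I \<and>
     (\<forall>f\<in>I. \<forall>g\<in>I. (\<lambda>A. f A + g A) \<in> I) \<and>
     (\<forall>f\<in>I. \<forall>g. regular_fun g \<longrightarrow> (\<lambda>A. g A * f A) \<in> I)"

definition zero_set_GL :: "((complex^'n^'n) \<Rightarrow> complex) set \<Rightarrow> (complex^'n^'n) set" where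
  "zero_set_GL I = {A. det A \<noteq> 0 \<and> (\<forall>f\<in>I. f A = 0)}"

definition conj_transpose :: "complex^'n^'n \<Rightarrow> complex^'n^'n" where
  "conj_transpose A = (\<chi> i j. cnj (A $ j $ i))"

text \<open>x is a representative of sLog A: the singular values of A (with multiplicity) are
  exp(x_i), i.e. the eigenvalues of A^* A with multiplicity are exp(x_i)^2, i.e. the
  characteristic polynomial of A^* A is prod_i (t - exp(x_i)^2).\<close>
definition sLog_rep :: "complex^'n^'n \<Rightarrow> real^'n \<Rightarrow> bool" where
  "sLog_rep A x \<longleftrightarrow> (\<forall>t::complex. det (mat t - conj_transpose A ** A) =
      (\<Prod>i\<in>UNIV. t - complex_of_real (exp (x $ i) ^ 2)))"

text \<open>Matrix amoeba sA(I), represented by its full (S_n-invariant) preimage in R^n.\<close>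
definition matrix_amoeba :: "((complex^'n^'n) \<Rightarrow> complex) set \<Rightarrow> (real^'n) set" where
  "matrix_amoeba I = {x. \<exists>A\<in>zero_set_GL I. sLog_rep A x}"

text \<open>The metric on R^n/S_n, evaluated on representatives.\<close>
definition perm_dist :: "real^'n \<Rightarrow> real^'n \<Rightarrow> real" where
  "perm_dist x y = Min {norm ((\<chi> i. x $ (\<sigma> i)) - y) | \<sigma>. \<sigma> permutes (UNIV::'n set)}"

text \<open>A set of points of R^n/S_n (given by representatives) is closed in the metric space
  (R^n/S_n, d): it contains every point at d-distance 0 from it.\<close>
definition closed_quot :: "(real^'n) set \<Rightarrow> bool" where
  "closed_quot S \<longleftrightarrow> (\<forall>x. (\<forall>e>0. \<exists>y\<in>S. perm_dist x y < e) \<longrightarrow> x \<in> S)"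

end

theory Submission imports Defs "HOL-Computational_Algebra.Polynomial" begin

lemma coeff_prod_lin:
  fixes a :: "'i \<Rightarrow> 'a::comm_ring_1"
  assumes "finite S"
  shows "coeff (\<Prod>i\<in>S. [:a i, 1:]) (card S) = 1 \<and> (\<forall>j>card S. coeff (\<Prod>i\<in>S. [:a i, 1:]) j = 0)
     \<and> (S \<noteq> {} \<longrightarrow> coeff (\<Prod>i\<in>S. [:a i, 1:]) (card S - 1) = (\<Sum>i\<in>S. a i))"
  using assms
proof (induction S rule: finite_induct)
  case empty
  then show ?case by (auto simp: coeff_1)
next
  case (insert x F)
  define Q where "Q = (\<Prod>i\<in>F. [:a i, 1:])"
  have P: "(\<Prod>i\<in>insert x F. [:a i, 1:]) = smult (a x) Q + pCons 0 Q"
    using insert by (simp add: Q_def)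
  have c: "card (insert x F) = Suc (card F)" using insert by simp
  have IH1: "coeff Q (card F) = 1" and IH2: "\<And>j. j > card F \<Longrightarrow> coeff Q j = 0"
    and IH3: "F \<noteq> {} \<Longrightarrow> coeff Q (card F - 1) = (\<Sum>i\<in>F. a i)"
    using insert.IH by (auto simp: Q_def)
  have A: "coeff (smult (a x) Q + pCons 0 Q) (Suc (card F)) = 1"
    using IH1 IH2[of "Suc (card F)"] by simp
  have B: "\<forall>j>Suc (card F). coeff (smult (a x) Q + pCons 0 Q) j = 0"
  proof (intro allI impI)
    fix j assume "j > Suc (card F)"
    then obtain m where "j = Suc m" "m > card F" by (cases j) auto
    then show "coeff (smult (a x) Q + pCons 0 Q) j = 0" using IH2 by simp
  qed
  have C: "coeff (smult (a x) Q + pCons 0 Q) (card F) = (\<Sum>i\<in>insert x F. a i)"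
  proof (cases "F = {}")
    case True
    then show ?thesis by (simp add: Q_def)
  next
    case False
    then have "card F > 0" using insert by auto
    then obtain m where m: "card F = Suc m" by (cases "card F") auto
    have "coeff (smult (a x) Q + pCons 0 Q) (card F) = a x * 1 + coeff Q m"
      using IH1 m by simp
    also have "\<dots> = a x + (\<Sum>i\<in>F. a i)" using IH3 False m by simp
    finally show ?thesis using insert by simp
  qed
  show ?case unfolding P c using A B C by simp
qed


definition cpoly :: "complex^'n^'n \<Rightarrow> complex poly" where
  "cpoly M = (\<Sum>p\<in>{p. p permutes (UNIV::'n set)}. of_int (sign p) *
      (\<Prod>i\<in>UNIV. [:- M$i$(p i), if p i = i then 1 else 0:]))"

lemma det_cpoly: "det (mat t - M) = poly (cpoly M) t"
proof -
  have e: "(mat t - M)$i$(p i) = poly [:- M$i$(p i), if p i = i then 1 else 0:] t" for i p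
    by (simp add: mat_def)
  show ?thesis
    unfolding det_def cpoly_def poly_sum poly_mult poly_prod poly_of_int
    apply (intro sum.cong refl arg_cong2[where f="(*)"] prod.cong)
    apply (rule e)
    done
qed

lemma fixpts_card:
  assumes "p permutes (UNIV::'n::finite set)" "p \<noteq> id"
  shows "card {i. p i = i} + 2 \<le> CARD('n)"
proof -
  obtain i where i: "p i \<noteq> i" using assms(2) by (metis eq_id_iff)
  have "p (p i) \<noteq> p i" using i permutes_inj[OF assms(1)] by (metis injD)
  then have "{i. p i = i} \<subseteq> UNIV - {i, p i}" using i by auto
  then have "card {i. p i = i} \<le> card (UNIV - {i, p i})" by (intro card_mono) auto
  also have "\<dots> = CARD('n) - 2" using i by (simp add: card_Diff_subset)
  moreover have "card {i, p i} \<le> CARD('n)" by (rule card_mono) auto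
  ultimately show ?thesis using i by simp
qed

lemma coeff_cpoly: "coeff (cpoly M) (CARD('n) - 1) = - (\<Sum>i\<in>UNIV. M$i$i)" for M :: "complex^'n^'n"
proof -
  let ?f = "\<lambda>p. of_int (sign p) * (\<Prod>i\<in>UNIV. [:- M$i$(p i), if p i = i then 1 else 0:])"
  have z: "coeff (?f p) (CARD('n) - 1) = 0" if "p permutes UNIV" "p \<noteq> id" for p
  proof -
    have "degree (\<Prod>i\<in>UNIV. [:- M$i$(p i), if p i = i then 1 else 0:]) \<le>
        (\<Sum>i\<in>UNIV. degree [:- M$i$(p i), if p i = i then 1 else 0:])"
      using degree_prod_sum_le[OF finite_class.finite_UNIV, of "\<lambda>i. [:- M$i$(p i), if p i = i then 1 else 0:]"]
      by (simp only: o_def)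
    also have "\<dots> \<le> (\<Sum>i\<in>UNIV. if p i = i then 1 else 0)"
      by (intro sum_mono) auto
    also have "\<dots> = card {i. p i = i}" by (simp add: sum.If_cases)
    finally have "degree (\<Prod>i\<in>UNIV. [:- M$i$(p i), if p i = i then 1 else 0:]) < CARD('n) - 1"
      using fixpts_card[OF that] by linarith
    then show ?thesis by (simp add: coeff_eq_0 of_int_poly del: pCons_eq_0_iff)
  qed
  have "coeff (cpoly M) (CARD('n) - 1) = (\<Sum>p\<in>{p. p permutes (UNIV::'n set)}. coeff (?f p) (CARD('n) - 1))"
    unfolding cpoly_def coeff_sum ..
  also have "\<dots> = coeff (?f id) (CARD('n) - 1)"
    using z by (subst sum.remove[of _ id]) (auto simp: permutes_id intro!: sum.neutral)
  also have "\<dots> = coeff (\<Prod>i\<in>UNIV. [:- M$i$i, 1:]) (CARD('n) - 1)" by simp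
  also have "\<dots> = (\<Sum>i\<in>UNIV. - M$i$i)"
    using coeff_prod_lin[of "UNIV::'n set" "\<lambda>i. - M$i$i"] by simp
  finally show ?thesis by (simp add: sum_negf)
qed

lemma trace_eq:
  fixes M :: "complex^'n^'n" and c :: "'n \<Rightarrow> complex"
  assumes "\<And>t. det (mat t - M) = (\<Prod>i\<in>UNIV. t - c i)"
  shows "(\<Sum>i\<in>UNIV. M$i$i) = (\<Sum>i\<in>UNIV. c i)"
proof -
  have "poly (cpoly M) = poly (\<Prod>i\<in>UNIV. [:- c i, 1:])"
    using assms by (auto simp: det_cpoly[symmetric] poly_prod)
  then have "cpoly M = (\<Prod>i\<in>UNIV. [:- c i, 1:])" by (simp add: poly_eq_poly_eq_iff)
  then have "coeff (cpoly M) (CARD('n) - 1) = (\<Sum>i\<in>UNIV. - c i)"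
    using coeff_prod_lin[of "UNIV::'n set" "\<lambda>i. - c i"] by simp
  then show ?thesis using coeff_cpoly[of M] by (simp add: sum_negf)
qed


lemma norm_sq_trace:
  fixes A :: "complex^'n^'n"
  shows "(\<Sum>j\<in>UNIV. (conj_transpose A ** A)$j$j) = complex_of_real ((norm A)^2)"
proof -
  have n1: "(norm A)^2 = (\<Sum>i\<in>UNIV. (norm (A$i))^2)"
    unfolding norm_vec_def L2_set_def by (simp add: sum_nonneg)
  have n2: "(norm (A$i))^2 = (\<Sum>j\<in>UNIV. (norm (A$i$j))^2)" for i
    unfolding norm_vec_def L2_set_def by (simp add: sum_nonneg)
  have "(\<Sum>j\<in>UNIV. (conj_transpose A ** A)$j$j) = (\<Sum>j\<in>UNIV. \<Sum>i\<in>UNIV. cnj (A$i$j) * A$i$j)"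
    by (simp add: conj_transpose_def matrix_matrix_mult_def)
  also have "\<dots> = (\<Sum>j\<in>UNIV. \<Sum>i\<in>UNIV. complex_of_real ((norm (A$i$j))^2))"
    by (intro sum.cong refl) (subst complex_norm_square, simp add: mult.commute)
  also have "\<dots> = complex_of_real (\<Sum>i\<in>UNIV. \<Sum>j\<in>UNIV. (norm (A$i$j))^2)"
    by (subst sum.swap) simp
  also have "\<dots> = complex_of_real ((norm A)^2)" using n1 n2 by simp
  finally show ?thesis .
qed

lemma det_tendsto:
  fixes f :: "nat \<Rightarrow> complex^'n^'n"
  assumes "f \<longlonglongrightarrow> A"
  shows "(\<lambda>k. det (f k)) \<longlonglongrightarrow> det A"
  unfolding det_def by (intro tendsto_intros assms)

lemma cp_tendsto:
  fixes f :: "nat \<Rightarrow> complex^'n^'n"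
  assumes "f \<longlonglongrightarrow> A"
  shows "(\<lambda>k. mat t - conj_transpose (f k) ** f k) \<longlonglongrightarrow> mat t - conj_transpose A ** A"
  by (intro vec_tendstoI)
     (simp add: conj_transpose_def matrix_matrix_mult_def, intro tendsto_intros assms)

lemma polyfun_tendsto:
  fixes f :: "nat \<Rightarrow> complex^'n^'n"
  assumes "p \<in> poly_fun" "f \<longlonglongrightarrow> A"
  shows "(\<lambda>k. p (f k)) \<longlonglongrightarrow> p A"
  using assms(1) by induction (auto intro!: tendsto_intros assms(2))

lemma mat_neg: "mat (-1) ** M = mat 0 - (M::complex^'n^'n)"
proof -
  have "(\<Sum>k\<in>UNIV. (if i = k then - 1 else 0) * M $ k $ j) = (\<Sum>k\<in>UNIV. if i = k then - M$k$j else 0)"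
    for i j by (rule sum.cong) auto
  then show ?thesis by (simp add: vec_eq_iff matrix_matrix_mult_def mat_def)
qed

lemma perm_dist_lt:
  assumes "perm_dist x y < e"
  shows "\<exists>\<sigma>. \<sigma> permutes (UNIV::'n::finite set) \<and> norm ((\<chi> i. x $ (\<sigma> i)) - y) < e"
proof -
  have eq: "{norm ((\<chi> i. x $ (\<sigma> i)) - y) | \<sigma>. \<sigma> permutes (UNIV::'n set)}
     = (\<lambda>\<sigma>. norm ((\<chi> i. x $ (\<sigma> i)) - y)) ` {\<sigma>. \<sigma> permutes (UNIV::'n set)}" by auto
  have "finite {\<sigma>. \<sigma> permutes (UNIV::'n set)}" by (simp add: finite_permutations)
  moreover have "{\<sigma>. \<sigma> permutes (UNIV::'n set)} \<noteq> {}" using permutes_id by blast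
  ultimately show ?thesis using assms unfolding perm_dist_def eq
    by (subst (asm) Min_less_iff) auto
qed

lemma perm_norm:
  fixes x y :: "real^'n"
  assumes "\<sigma> permutes UNIV"
  shows "norm (x - (\<chi> i. y $ (inv \<sigma> i))) = norm ((\<chi> i. x $ (\<sigma> i)) - y)"
proof -
  have "(\<Sum>i\<in>UNIV. (norm (x$i - y$(inv \<sigma> i)))^2) = (\<Sum>j\<in>UNIV. (norm (x$(\<sigma> j) - y$j))^2)"
    using sum.permute[OF assms, of "\<lambda>i. (norm (x$i - y$(inv \<sigma> i)))^2"]
    by (simp add: o_def permutes_inverses(2)[OF assms])
  then show ?thesis unfolding norm_vec_def L2_set_def by simp
qed

lemma perm_sLog:
  assumes "\<sigma> permutes UNIV" "sLog_rep A y"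
  shows "sLog_rep A (\<chi> i. y $ (inv \<sigma> i))"
proof -
  have p: "inv \<sigma> permutes UNIV" using assms(1) by (rule permutes_inv)
  show ?thesis using assms(2) unfolding sLog_rep_def
    using prod.permute[OF p, of "\<lambda>i. t - complex_of_real (exp (y $ i) ^ 2)" for t]
    by (simp add: o_def)
qed


theorem mainTheorem3:
  fixes I :: "((complex^'n^'n) \<Rightarrow> complex) set"
  assumes "is_ideal_GL I"
  shows "closed_quot (matrix_amoeba I)"
  unfolding closed_quot_def
proof (intro allI impI)
  fix x :: "real^'n"
  assume H: "\<forall>e>0. \<exists>y\<in>matrix_amoeba I. perm_dist x y < e"
  have "\<exists>w A. A \<in> zero_set_GL I \<and> sLog_rep A w \<and> norm (x - w) < inverse (real (Suc k))" for k
  proof -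
    obtain y where y: "y \<in> matrix_amoeba I" "perm_dist x y < inverse (real (Suc k))"
      using H by (meson inverse_positive_iff_positive of_nat_0_less_iff zero_less_Suc)
    obtain \<sigma> where s: "\<sigma> permutes UNIV" "norm ((\<chi> i. x $ (\<sigma> i)) - y) < inverse (real (Suc k))"
      using perm_dist_lt[OF y(2)] by blast
    obtain A where A: "A \<in> zero_set_GL I" "sLog_rep A y" using y(1) unfolding matrix_amoeba_def by blast
    show ?thesis
      using perm_sLog[OF s(1) A(2)] perm_norm[OF s(1), of x y] s(2) A(1) by metis
  qed
  then obtain W Aq where WA: "\<And>k. Aq k \<in> zero_set_GL I" "\<And>k. sLog_rep (Aq k) (W k)"
     "\<And>k. norm (x - W k) < inverse (real (Suc k))"
    by metis
  have "(\<lambda>k. x - W k) \<longlonglongrightarrow> 0"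
    by (rule Lim_null_comparison[OF always_eventually LIMSEQ_inverse_real_of_nat])
       (intro allI less_imp_le WA(3))
  then have Wlim: "W \<longlonglongrightarrow> x"
    using tendsto_diff[OF tendsto_const[of x], of "\<lambda>k. x - W k" 0] by simp
  then obtain B where B: "\<And>k. norm (W k) \<le> B"
    using convergent_imp_Bseq[of W] Wlim unfolding Bseq_def convergent_def by blast
  have tr: "(norm (Aq k))^2 = (\<Sum>i\<in>UNIV. exp (W k $ i) ^ 2)" for k
  proof -
    have "(\<Sum>j\<in>UNIV. (conj_transpose (Aq k) ** Aq k)$j$j) = (\<Sum>i\<in>UNIV. complex_of_real (exp (W k $ i) ^ 2))"
      by (rule trace_eq) (use WA(2) in \<open>simp add: sLog_rep_def\<close>)
    then show ?thesis unfolding norm_sq_trace by (metis of_real_eq_iff of_real_sum)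
  qed
  have "(norm (Aq k))^2 \<le> real CARD('n) * exp B ^ 2" for k
  proof -
    have "exp (W k $ i) ^ 2 \<le> exp B ^ 2" for i
      using component_le_norm_cart[of "W k" i] B[of k] by (intro power_mono) auto
    then have "(\<Sum>i\<in>UNIV. exp (W k $ i) ^ 2) \<le> (\<Sum>i\<in>(UNIV::'n set). exp B ^ 2)"
      by (intro sum_mono) auto
    then show ?thesis using tr by simp
  qed
  then have "norm (Aq k) \<le> sqrt (real CARD('n) * exp B ^ 2)" for k
    by (metis norm_ge_zero real_le_rsqrt)
  then have "bounded (range Aq)" unfolding bounded_iff by blast
  then obtain L r where r: "strict_mono r" "(Aq \<circ> r) \<longlonglongrightarrow> L"
    using bounded_imp_convergent_subsequence by blast
  have Wr: "(W \<circ> r) \<longlonglongrightarrow> x" using LIMSEQ_subseq_LIMSEQ[OF Wlim r(1)] .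
  have SL: "sLog_rep L x" unfolding sLog_rep_def
  proof
    fix t :: complex
    have 1: "(\<lambda>k. det (mat t - conj_transpose ((Aq \<circ> r) k) ** (Aq \<circ> r) k))
        \<longlonglongrightarrow> det (mat t - conj_transpose L ** L)"
      by (intro det_tendsto cp_tendsto r(2))
    have 2: "(\<lambda>k. (\<Prod>i\<in>UNIV. t - complex_of_real (exp ((W \<circ> r) k $ i) ^ 2)))
        \<longlonglongrightarrow> (\<Prod>i\<in>UNIV. t - complex_of_real (exp (x $ i) ^ 2))"
      by (intro tendsto_intros Wr)
    have 3: "det (mat t - conj_transpose ((Aq \<circ> r) k) ** (Aq \<circ> r) k) =
        (\<Prod>i\<in>UNIV. t - complex_of_real (exp ((W \<circ> r) k $ i) ^ 2))" for k
      using WA(2)[of "r k"] by (simp add: sLog_rep_def)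
    show "det (mat t - conj_transpose L ** L) = (\<Prod>i\<in>UNIV. t - complex_of_real (exp (x $ i) ^ 2))"
      using 1 2 unfolding 3 by (rule LIMSEQ_unique)
  qed
  have dL: "det L \<noteq> 0"
  proof
    assume "det L = 0"
    then have "det (mat (-1) ** (conj_transpose L ** L)) = 0" by (simp add: det_mul)
    then have "det (mat 0 - conj_transpose L ** L) = 0" by (simp add: mat_neg)
    moreover have "(\<Prod>i\<in>UNIV. 0 - complex_of_real (exp (x $ i) ^ 2)) \<noteq> 0"
      by (simp add: prod_zero_iff)
    ultimately show False using SL unfolding sLog_rep_def by metis
  qed
  have "f L = 0" if f: "f \<in> I" for f
  proof -
    have "regular_fun f" using assms f unfolding is_ideal_GL_def by blast
    then obtain p m where p: "p \<in> poly_fun" "f = (\<lambda>A. if det A = 0 then 0 else p A / det A ^ m)"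
      unfolding regular_fun_def by blast
    have "p (Aq k) = 0" for k
      using WA(1)[of k] f p(2) unfolding zero_set_GL_def by (auto split: if_splits)
    then have "(\<lambda>k. p ((Aq \<circ> r) k)) \<longlonglongrightarrow> 0" by simp
    moreover have "(\<lambda>k. p ((Aq \<circ> r) k)) \<longlonglongrightarrow> p L" by (rule polyfun_tendsto[OF p(1) r(2)])
    ultimately have "p L = 0" using LIMSEQ_unique by blast
    then show ?thesis using p(2) by simp
  qed
  then have "L \<in> zero_set_GL I" using dL unfolding zero_set_GL_def by blast
  then show "x \<in> matrix_amoeba I" using SL unfolding matrix_amoeba_def by blast
qed

end
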